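(* Let $G=(V,E)$ be a directed graph, $T=\{t_1,\dots,t_{n_T}\}$ a finite task set, and for each $t_j\in T$ let $W^j=\{w^j_{uv}\in[0,1]:(u,v)\in E\}$. Let $\mathcal{L}:V\to\{a_1,\dots,a_{n_A}\}$ be a location map and $q_j^k\ge 0$ completion qualities for each task $t_j$ and sub-area $a_k$. Let $V_R\subseteq V$ and for each $v_i\in V_R$ let $T_i\subseteq T$. Then the multi-task diffusion function $f:2^{V_R}\to\mathbb{R}_{\ge 0}$ defined in the context is monotone and submodular, i.e. for all $S_1\subseteq S_2\subseteq V_R$ and $u\in V_R\setminus S_2$: $f(S_1)\le f(S_2)$ and $f(S_1\cup\{u\})-f(S_1)\ge f(S_2\cup\{u\})-f(S_2)$.
   Context: For a task $t_j$, a realization $g$ of $W^j$ is a random spanning subgraph $(V,E_g)$ of $G$ in which each edge $(u,v)\in E$ is included independently with probability $w^j_{uv}$; $\Pr[g;W^j]=\prod_{e\in E_g}w^j_e\prod_{e\in E\setminus E_g}(1-w^j_e)$. For $A\subseteq V$, $I_g(A)$ is the set of nodes reachable from a node of $A$ by a directed path in $g$ (including $A$). For $S\subseteq V_R$, $S^j=\{v_i\in S: t_j\in T_i\}$. The multi-task diffusion function is $f(S)=\frac{1}{n_T}\sum_{t_j\in T}\sum_{g}\Pr[g;W^j]\sum_{v\in I_g(S^j)}q_j^{\mathcal{L}(v)}$. *)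

theory Defs
  imports Complex_Main
begin

definition real_prob :: "('v \<times> 'v) set \<Rightarrow> ('v \<Rightarrow> 'v \<Rightarrow> real) \<Rightarrow> ('v \<times> 'v) set \<Rightarrow> real" where
  "real_prob E w g = (\<Prod>e\<in>g. w (fst e) (snd e)) * (\<Prod>e\<in>E - g. 1 - w (fst e) (snd e))"

definition reach :: "('v \<times> 'v) set \<Rightarrow> 'v set \<Rightarrow> 'v set" where
  "reach g A = {v. \<exists>a\<in>A. (a, v) \<in> g\<^sup>*}"

definition task_seeds :: "('v \<Rightarrow> 't set) \<Rightarrow> 'v set \<Rightarrow> 't \<Rightarrow> 'v set" where
  "task_seeds Ti S j = {v\<in>S. j \<in> Ti v}"

definition diffusion ::
  "('v \<times> 'v) set \<Rightarrow> 't set \<Rightarrow> ('t \<Rightarrow> 'v \<Rightarrow> 'v \<Rightarrow> real) \<Rightarrow> ('v \<Rightarrow> 'a)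
   \<Rightarrow> ('t \<Rightarrow> 'a \<Rightarrow> real) \<Rightarrow> ('v \<Rightarrow> 't set) \<Rightarrow> 'v set \<Rightarrow> real" where
  "diffusion E T w L q Ti S =
     (1 / real (card T)) * (\<Sum>j\<in>T. \<Sum>g\<in>Pow E.
        real_prob E (w j) g * (\<Sum>v\<in>reach g (task_seeds Ti S j). q j (L v)))"

end

theory Submission
  imports Defs
begin

lemma cover_aux:
  fixes c :: "'v \<Rightarrow> real"
  assumes "finite X" "R1 \<subseteq> R2" "R2 \<subseteq> X" "U \<subseteq> X" "\<And>v. v \<in> X \<Longrightarrow> 0 \<le> c v"
  shows "sum c R1 \<le> sum c R2 \<and> sum c (R1 \<union> U) - sum c R1 \<ge> sum c (R2 \<union> U) - sum c R2"
proof -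
  have fR2: "finite R2" using assms(1,3) by (rule finite_subset[rotated])
  have fR1: "finite R1" using fR2 assms(2) by (rule finite_subset[rotated])
  have fU: "finite U" using assms(1,4) by (rule finite_subset[rotated])
  have nn2: "\<And>b. b \<in> R2 - R1 \<Longrightarrow> 0 \<le> c b" using assms(3,5) by blast
  have m: "sum c R1 \<le> sum c R2"
    by (rule sum_mono2[OF fR2 assms(2) nn2])
  have e: "sum c (R \<union> U) = sum c R + sum c (U - R)" if fR: "finite R" for R
  proof -
    have eq: "R \<union> U = R \<union> (U - R)" by blast
    have fD: "finite (U - R)" using fU by (rule finite_Diff)
    have dj: "R \<inter> (U - R) = {}" by blast
    show ?thesis unfolding eq by (rule sum.union_disjoint[OF fR fD dj])
  qed
  have fD1: "finite (U - R1)" using fU by (rule finite_Diff)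
  have sub: "U - R2 \<subseteq> U - R1" using assms(2) by blast
  have nn1: "\<And>b. b \<in> (U - R1) - (U - R2) \<Longrightarrow> 0 \<le> c b" using assms(4,5) by blast
  have "sum c (U - R2) \<le> sum c (U - R1)"
    by (rule sum_mono2[OF fD1 sub nn1])
  then show ?thesis using m e[OF fR1] e[OF fR2] by linarith
qed

lemma reach_Un: "reach g (A \<union> B) = reach g A \<union> reach g B"
  unfolding reach_def by blast

lemma reach_mono: "A \<subseteq> B \<Longrightarrow> reach g A \<subseteq> reach g B"
  unfolding reach_def by blast

lemma reach_sub: "g \<subseteq> V \<times> V \<Longrightarrow> A \<subseteq> V \<Longrightarrow> reach g A \<subseteq> V"
  unfolding reach_def
proof safe
  fix x a assume "g \<subseteq> V \<times> V" "A \<subseteq> V" "a \<in> A" "(a, x) \<in> g\<^sup>*"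
  from \<open>(a, x) \<in> g\<^sup>*\<close> show "x \<in> V"
  proof (cases rule: rtranclE)
    case base
    then show ?thesis using \<open>a \<in> A\<close> \<open>A \<subseteq> V\<close> by auto
  next
    case (step y)
    then show ?thesis using \<open>g \<subseteq> V \<times> V\<close> by auto
  qed
qed

lemma ts_Un: "task_seeds Ti (A \<union> B) j = task_seeds Ti A j \<union> task_seeds Ti B j"
  unfolding task_seeds_def by blast

lemma ts_mono: "A \<subseteq> B \<Longrightarrow> task_seeds Ti A j \<subseteq> task_seeds Ti B j"
  unfolding task_seeds_def by blast

lemma ts_sub: "task_seeds Ti A j \<subseteq> A"
  unfolding task_seeds_def by blast

lemma prob_nonneg:
  assumes "g \<subseteq> E" "\<And>u v. (u, v) \<in> E \<Longrightarrow> 0 \<le> w u v \<and> w u v \<le> 1"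
  shows "0 \<le> real_prob E w g"
  unfolding real_prob_def
proof (rule mult_nonneg_nonneg)
  show "0 \<le> (\<Prod>e\<in>g. w (fst e) (snd e))"
  proof (rule prod_nonneg)
    fix e assume "e \<in> g"
    then have "(fst e, snd e) \<in> E" using assms(1) by auto
    then show "0 \<le> w (fst e) (snd e)" using assms(2) by blast
  qed
  show "0 \<le> (\<Prod>e\<in>E - g. 1 - w (fst e) (snd e))"
  proof (rule prod_nonneg)
    fix e assume "e \<in> E - g"
    then have "(fst e, snd e) \<in> E" by simp
    then have "w (fst e) (snd e) \<le> 1" using assms(2) by blast
    then show "0 \<le> 1 - w (fst e) (snd e)" by simp
  qed
qed

theorem theorem2:
  fixes V :: "'v set" and E :: "('v \<times> 'v) set" and T :: "'t set"
    and w :: "'t \<Rightarrow> 'v \<Rightarrow> 'v \<Rightarrow> real" and L :: "'v \<Rightarrow> 'a" and Areas :: "'a set"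
    and q :: "'t \<Rightarrow> 'a \<Rightarrow> real" and VR :: "'v set" and Ti :: "'v \<Rightarrow> 't set"
  assumes "finite V" and "E \<subseteq> V \<times> V"
    and "finite T"
    and "\<And>j u v. j \<in> T \<Longrightarrow> (u, v) \<in> E \<Longrightarrow> 0 \<le> w j u v \<and> w j u v \<le> 1"
    and "finite Areas" and "L ` V \<subseteq> Areas"
    and "\<And>j k. j \<in> T \<Longrightarrow> k \<in> Areas \<Longrightarrow> 0 \<le> q j k"
    and "VR \<subseteq> V" and "\<And>v. v \<in> VR \<Longrightarrow> Ti v \<subseteq> T"
  shows "\<forall>S1 S2 u. S1 \<subseteq> S2 \<and> S2 \<subseteq> VR \<and> u \<in> VR - S2 \<longrightarrow>
           diffusion E T w L q Ti S1 \<le> diffusion E T w L q Ti S2 \<and>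
           diffusion E T w L q Ti (S1 \<union> {u}) - diffusion E T w L q Ti S1
             \<ge> diffusion E T w L q Ti (S2 \<union> {u}) - diffusion E T w L q Ti S2"
proof (intro allI impI)
  fix S1 S2 u assume H: "S1 \<subseteq> S2 \<and> S2 \<subseteq> VR \<and> u \<in> VR - S2"
  define p where "p j g = real_prob E (w j) g" for j g
  define F where "F j g S = (\<Sum>v\<in>reach g (task_seeds Ti S j). q j (L v))" for j g S
  define D where "D S = (\<Sum>j\<in>T. \<Sum>g\<in>Pow E. p j g * F j g S)" for S
  have dif: "diffusion E T w L q Ti S = (1 / real (card T)) * D S" for S
    unfolding diffusion_def D_def p_def F_def by simp
  have pn: "0 \<le> p j g" if "j \<in> T" "g \<in> Pow E" for j g
    unfolding p_def using prob_nonneg[of g E "w j"] that assms(4) by auto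
  have loc: "F j g S1 \<le> F j g S2 \<and> F j g (S1 \<union> {u}) - F j g S1 \<ge> F j g (S2 \<union> {u}) - F j g S2"
    if "j \<in> T" "g \<in> Pow E" for j g
  proof -
    have gV: "g \<subseteq> V \<times> V" using that assms(2) by auto
    have S2V: "S2 \<subseteq> V" and uV: "{u} \<subseteq> V" using H assms(8) by auto
    let ?R1 = "reach g (task_seeds Ti S1 j)" and ?R2 = "reach g (task_seeds Ti S2 j)"
      and ?U = "reach g (task_seeds Ti {u} j)"
    have R12: "?R1 \<subseteq> ?R2" by (rule reach_mono, rule ts_mono) (use H in auto)
    have t2: "task_seeds Ti S2 j \<subseteq> V" using ts_sub[of Ti S2 j] S2V by (rule order_trans)
    have tu: "task_seeds Ti {u} j \<subseteq> V" using ts_sub[of Ti "{u}" j] uV by (rule order_trans)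
    have R2V: "?R2 \<subseteq> V" by (rule reach_sub[OF gV t2])
    have UV: "?U \<subseteq> V" by (rule reach_sub[OF gV tu])
    have cn: "\<And>v. v \<in> V \<Longrightarrow> 0 \<le> q j (L v)" using assms(6,7) that by blast
    have Fu: "F j g (S \<union> {u}) = (\<Sum>v\<in>reach g (task_seeds Ti S j) \<union> ?U. q j (L v))" for S
      unfolding F_def ts_Un reach_Un ..
    note cv = cover_aux[where c="\<lambda>v. q j (L v)", OF assms(1) R12 R2V UV cn]
    show ?thesis unfolding Fu unfolding F_def using cv by linarith
  qed
  have loc1: "F j g S1 \<le> F j g S2" if "j \<in> T" "g \<in> Pow E" for j g
    using loc[OF that] by (rule conjunct1)
  have loc2: "F j g (S2 \<union> {u}) - F j g S2 \<le> F j g (S1 \<union> {u}) - F j g S1" if "j \<in> T" "g \<in> Pow E" for j g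
    using loc[OF that] by (rule conjunct2)
  have a1: "D S1 \<le> D S2" unfolding D_def
    by (rule sum_mono, rule sum_mono, rule mult_left_mono, rule loc1, assumption+, rule pn, assumption+)
  have sd: "(\<Sum>j\<in>T. \<Sum>g\<in>Pow E. p j g * (F j g A - F j g B)) = D A - D B" for A B
  proof -
    have "(\<Sum>j\<in>T. \<Sum>g\<in>Pow E. p j g * (F j g A - F j g B))
        = (\<Sum>j\<in>T. (\<Sum>g\<in>Pow E. p j g * F j g A) - (\<Sum>g\<in>Pow E. p j g * F j g B))"
      by (rule sum.cong[OF refl], subst sum_subtractf[symmetric], rule sum.cong[OF refl], rule right_diff_distrib)
    also have "\<dots> = D A - D B" unfolding D_def by (rule sum_subtractf)
    finally show ?thesis .
  qed
  have a2: "D (S1 \<union> {u}) - D S1 \<ge> D (S2 \<union> {u}) - D S2"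
    unfolding sd[symmetric]
    by (rule sum_mono, rule sum_mono, rule mult_left_mono, rule loc2, assumption+, rule pn, assumption+)
  show "diffusion E T w L q Ti S1 \<le> diffusion E T w L q Ti S2 \<and>
           diffusion E T w L q Ti (S1 \<union> {u}) - diffusion E T w L q Ti S1
             \<ge> diffusion E T w L q Ti (S2 \<union> {u}) - diffusion E T w L q Ti S2"
  proof -
    let ?c = "1 / real (card T)"
    have c0: "0 \<le> ?c" by simp
    show ?thesis unfolding dif
    proof (rule conjI)
      show "?c * D S1 \<le> ?c * D S2" by (rule mult_left_mono[OF a1 c0])
      show "?c * D (S2 \<union> {u}) - ?c * D S2 \<le> ?c * D (S1 \<union> {u}) - ?c * D S1"
      proof -
        have e1: "?c * D (S2 \<union> {u}) - ?c * D S2 = ?c * (D (S2 \<union> {u}) - D S2)"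
          by (rule right_diff_distrib[symmetric])
        have e2: "?c * D (S1 \<union> {u}) - ?c * D S1 = ?c * (D (S1 \<union> {u}) - D S1)"
          by (rule right_diff_distrib[symmetric])
        show ?thesis by (subst e1, subst e2, rule mult_left_mono[OF a2 c0])
      qed
    qed
  qed
qed

end
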